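(* Let $L_0$ be the Laplacian of a connected undirected simple graph on $n$ vertices with positive nominal edge weight vector $\omega_0$, with nonzero eigenvalues $0<\lambda_{0,2}\le\dots\le\lambda_{0,n}$. Fix $\tau>0$, $b\neq0$ and $\alpha_\omega\in[0,1)$ with $(1+\alpha_\omega)\lambda_{0,n}\tau<\pi/2$. Let $f_\tau(\lambda)=\frac{\cos(\lambda\tau)}{\lambda(1-\sin(\lambda\tau))}$ on $(0,\pi/(2\tau))$, let $\bar\lambda$ be its (unique) minimizer there, and set $$\chi^{\pm}(\lambda)=\frac{|f_\tau((1\pm\alpha_\omega)\lambda)-f_\tau(\lambda)|}{f_\tau(\lambda)}.$$ Consider uniformly scaled edge weights $\omega=s\,\omega_0$ with $s\in[1-\alpha_\omega,1+\alpha_\omega]$, with Laplacian $L=sL_0$, and let $\Sigma$, $\Sigma_0$ denote the steady-state covariances for $L$ and $L_0$ respectively. Then: (i) if $(1+\alpha_\omega)\lambda_{0,n}\le\bar\lambda$, then $(1-\varepsilon^-)\Sigma_0\preceq\Sigma\preceq(1+\varepsilon^+)\Sigma_0$ with $\varepsilon^-=\max_{k\in\{2,\dots,n\}}\chi^+(\lambda_{0,k})$ and $\varepsilon^+=\max_{k\in\{2,\dots,n\}}\chi^-(\lambda_{0,k})$; (ii) if $(1-\alpha_\omega)\lambda_{0,2}\ge\bar\lambda$, then $(1-\varepsilon^-)\Sigma_0\preceq\Sigma\preceq(1+\varepsilon^+)\Sigma_0$ with $\varepsilon^+=\max_{k\in\{2,\dots,n\}}\chi^+(\lambda_{0,k})$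 and $\varepsilon^-=\max_{k\in\{2,\dots,n\}}\chi^-(\lambda_{0,k})$.
   Context: Network: $\mathrm dx_t=-L\,x_{t-\tau}\,\mathrm dt+b\,\mathrm dw_t$ with $w_t$ standard $n$-dimensional Brownian motion. Writing $L=Q\Lambda Q^\top$ with $Q=[q_1|\dots|q_n]$ orthogonal, $q_1=\mathbf 1_n/\sqrt n$, $\Lambda=\mathrm{diag}(0,\lambda_2,\dots,\lambda_n)$, $\lambda_n\tau<\pi/2$, the observables $y=M_nx$, $M_n=I_n-\frac1n\mathbf 1_n\mathbf 1_n^\top$, have steady-state law $\mathcal N(0,\Sigma)$ with $\Sigma=b^2M_nQ\,\mathrm{diag}\big(0,\tfrac12f_\tau(\lambda_2),\dots,\tfrac12f_\tau(\lambda_n)\big)Q^\top M_n$. $A\preceq B$ means $B-A$ is positive semidefinite. *)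

theory Defs
  imports Complex_Main
begin

text \<open>Matrices of size n x n are represented as functions nat => nat => real,
  with indices 0..n-1 (vertex i of the paper is index i-1).\<close>

definition mmul :: "nat \<Rightarrow> (nat \<Rightarrow> nat \<Rightarrow> real) \<Rightarrow> (nat \<Rightarrow> nat \<Rightarrow> real) \<Rightarrow> (nat \<Rightarrow> nat \<Rightarrow> real)" where
  "mmul n A B = (\<lambda>i j. \<Sum>k<n. A i k * B k j)"

definition mtrans :: "(nat \<Rightarrow> nat \<Rightarrow> real) \<Rightarrow> (nat \<Rightarrow> nat \<Rightarrow> real)" where
  "mtrans A = (\<lambda>i j. A j i)"

definition mdiag :: "(nat \<Rightarrow> real) \<Rightarrow> (nat \<Rightarrow> nat \<Rightarrow> real)" where
  "mdiag d = (\<lambda>i j. if i = j then d i else 0)"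

definition mscale :: "real \<Rightarrow> (nat \<Rightarrow> nat \<Rightarrow> real) \<Rightarrow> (nat \<Rightarrow> nat \<Rightarrow> real)" where
  "mscale c A = (\<lambda>i j. c * A i j)"

definition centering :: "nat \<Rightarrow> (nat \<Rightarrow> nat \<Rightarrow> real)" where
  "centering n = (\<lambda>i j. (if i = j then 1 else 0) - 1 / real n)"

definition loewner_le :: "nat \<Rightarrow> (nat \<Rightarrow> nat \<Rightarrow> real) \<Rightarrow> (nat \<Rightarrow> nat \<Rightarrow> real) \<Rightarrow> bool" where
  "loewner_le n A B \<longleftrightarrow> (\<forall>x :: nat \<Rightarrow> real. 0 \<le> (\<Sum>i<n. \<Sum>j<n. x i * (B i j - A i j) * x j))"

text \<open>Weighted graph Laplacian of a symmetric weight function w (w i j > 0 iff {i,j} is an edge).\<close>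
definition laplacian :: "nat \<Rightarrow> (nat \<Rightarrow> nat \<Rightarrow> real) \<Rightarrow> (nat \<Rightarrow> nat \<Rightarrow> real)" where
  "laplacian n w = (\<lambda>i j. if i = j then (\<Sum>k<n. w i k) else - w i j)"

definition weighted_simple_graph :: "nat \<Rightarrow> (nat \<Rightarrow> nat \<Rightarrow> real) \<Rightarrow> bool" where
  "weighted_simple_graph n w \<longleftrightarrow>
     (\<forall>i j. w i j = w j i) \<and> (\<forall>i. w i i = 0) \<and> (\<forall>i j. 0 \<le> w i j) \<and>
     (\<forall>i j. (i \<ge> n \<or> j \<ge> n) \<longrightarrow> w i j = 0)"

definition graph_connected :: "nat \<Rightarrow> (nat \<Rightarrow> nat \<Rightarrow> real) \<Rightarrow> bool" where
  "graph_connected n w \<longleftrightarrow>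
     (\<forall>i<n. \<forall>j<n. (i, j) \<in> {(a, b). a < n \<and> b < n \<and> 0 < w a b}\<^sup>*)"

definition f_tau :: "real \<Rightarrow> real \<Rightarrow> real" where
  "f_tau tau lam = cos (lam * tau) / (lam * (1 - sin (lam * tau)))"

definition chi_plus :: "real \<Rightarrow> real \<Rightarrow> real \<Rightarrow> real" where
  "chi_plus tau a lam = \<bar>f_tau tau ((1 + a) * lam) - f_tau tau lam\<bar> / f_tau tau lam"

definition chi_minus :: "real \<Rightarrow> real \<Rightarrow> real \<Rightarrow> real" where
  "chi_minus tau a lam = \<bar>f_tau tau ((1 - a) * lam) - f_tau tau lam\<bar> / f_tau tau lam"

text \<open>Steady-state covariance b^2 M_n Q diag(0, f(lam_2)/2, ..., f(lam_n)/2) Q^T M_n,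
  for the decomposition L = Q diag(lam) Q^T (lam 0 = 0 is the zero eigenvalue).\<close>
definition steady_cov :: "nat \<Rightarrow> real \<Rightarrow> real \<Rightarrow> (nat \<Rightarrow> nat \<Rightarrow> real) \<Rightarrow> (nat \<Rightarrow> real) \<Rightarrow> (nat \<Rightarrow> nat \<Rightarrow> real)" where
  "steady_cov n tau b Q lam =
     mscale (b\<^sup>2) (mmul n (mmul n (mmul n (mmul n (centering n) Q)
        (mdiag (\<lambda>k. if k = 0 then 0 else f_tau tau (lam k) / 2))) (mtrans Q)) (centering n))"

end

theory Submission imports Defs begin

definition fder :: "real \<Rightarrow> real \<Rightarrow> real" where
  "fder tau l = (1 - sin (l*tau)) * (l*tau - cos (l*tau)) / (l * (1 - sin (l*tau)))\<^sup>2"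

lemma f_deriv:
  assumes tau: "0 < tau" and l: "0 < l" "l * tau < pi/2"
  shows "(f_tau tau has_real_derivative fder tau l) (at l)"
proof -
  have lt: "0 < l*tau" using tau l by simp
  have s1: "sin (l*tau) < 1"
  proof -
    have "sin (l*tau) < sin (pi/2)"
      using lt l(2) by (intro sin_monotone_2pi) auto
    then show ?thesis by simp
  qed
  have D: "l * (1 - sin (l*tau)) \<noteq> 0" using l s1 by simp
  have "((\<lambda>x. cos (x*tau) / (x * (1 - sin (x*tau)))) has_real_derivative
     ((- sin (l*tau) * tau) * (l * (1 - sin (l*tau))) - cos (l*tau) * ((1 - sin (l*tau)) + l * (- cos (l*tau) * tau)))
       / (l * (1 - sin (l*tau)))\<^sup>2) (at l)"
    using D by (auto intro!: derivative_eq_intros simp: power2_eq_square algebra_simps)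
  moreover have "((- sin (l*tau) * tau) * (l * (1 - sin (l*tau))) - cos (l*tau) * ((1 - sin (l*tau)) + l * (- cos (l*tau) * tau)))
       = (1 - sin (l*tau)) * (l*tau - cos (l*tau))"
  proof -
    have c2: "(cos (l*tau))\<^sup>2 = 1 - (sin (l*tau))\<^sup>2" by (simp add: cos_squared_eq)
    show ?thesis using c2 by algebra
  qed
  ultimately show ?thesis unfolding fder_def by (simp add: f_tau_def[abs_def])
qed

lemma fder_sign:
  assumes tau: "0 < tau" and l: "0 < l" "l * tau < pi/2"
  shows "fder tau l \<le> 0 \<longleftrightarrow> l*tau - cos (l*tau) \<le> 0"
    and "fder tau l \<ge> 0 \<longleftrightarrow> l*tau - cos (l*tau) \<ge> 0"
proof -
  have lt: "0 < l*tau" using tau l by simp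
  have s1: "sin (l*tau) < 1"
  proof -
    have "sin (l*tau) < sin (pi/2)"
      using lt l(2) by (intro sin_monotone_2pi) auto
    then show ?thesis by simp
  qed
  have p: "0 < (1 - sin (l*tau)) / (l * (1 - sin (l*tau)))\<^sup>2" using s1 l by simp
  have e: "fder tau l = ((1 - sin (l*tau)) / (l * (1 - sin (l*tau)))\<^sup>2) * (l*tau - cos (l*tau))"
    unfolding fder_def by simp
  show "fder tau l \<le> 0 \<longleftrightarrow> l*tau - cos (l*tau) \<le> 0"
    unfolding e using p by (metis mult_le_cancel_left_pos mult_zero_right)
  show "fder tau l \<ge> 0 \<longleftrightarrow> l*tau - cos (l*tau) \<ge> 0"
    unfolding e using p by (metis mult_le_cancel_left_pos mult_zero_right)
qed

lemma g_mono:
  assumes "0 \<le> x" "x \<le> y" "y \<le> pi"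
  shows "x - cos x \<le> y - cos y"
  using cos_monotone_0_pi_le[OF assms] assms by simp

lemma lbar_fix:
  assumes tau: "0 < tau" and lbar: "0 < lbar" "lbar < pi / (2 * tau)"
    and lbar_min: "\<forall>l. 0 < l \<longrightarrow> l < pi / (2 * tau) \<longrightarrow> f_tau tau lbar \<le> f_tau tau l"
  shows "lbar * tau - cos (lbar * tau) = 0"
proof -
  have lt: "lbar * tau < pi/2" using lbar tau by (simp add: field_simps)
  have d: "fder tau lbar = 0"
  proof (rule DERIV_local_min[OF f_deriv[OF tau lbar(1) lt]])
    show "0 < min lbar (pi / (2 * tau) - lbar)" using lbar by simp
    show "\<forall>y. \<bar>lbar - y\<bar> < min lbar (pi / (2 * tau) - lbar) \<longrightarrow> f_tau tau lbar \<le> f_tau tau y"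
      using lbar_min by (auto simp: abs_if split: if_splits)
  qed
  show ?thesis using fder_sign[OF tau lbar(1) lt] d by linarith
qed

lemma f_dec:
  assumes tau: "0 < tau" and lbar: "0 < lbar" "lbar < pi / (2 * tau)"
    and lbar_min: "\<forall>l. 0 < l \<longrightarrow> l < pi / (2 * tau) \<longrightarrow> f_tau tau lbar \<le> f_tau tau l"
    and ab: "0 < a" "a \<le> b" "b \<le> lbar"
  shows "f_tau tau b \<le> f_tau tau a"
proof (rule deriv_nonpos_imp_antimono[where g="f_tau tau" and g'="fder tau" and a=a and b=b])
  have fx: "lbar * tau - cos (lbar * tau) = 0" by (rule lbar_fix[OF tau lbar lbar_min])
  have lt: "lbar * tau < pi/2" using lbar tau by (simp add: field_simps)
  fix x assume x: "x \<in> {a..b}"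
  then have x0: "0 < x" and xl: "x \<le> lbar" using ab by auto
  have xt: "x * tau < pi/2" using mult_right_mono[OF xl, of tau] tau lt by linarith
  show "(f_tau tau has_real_derivative fder tau x) (at x)" by (rule f_deriv[OF tau x0 xt])
  have "x*tau - cos (x*tau) \<le> lbar*tau - cos (lbar*tau)"
  proof (rule g_mono)
    show "0 \<le> x*tau" using x0 tau by simp
    show "x*tau \<le> lbar*tau" using xl tau by simp
    show "lbar*tau \<le> pi" using lt pi_gt_zero by linarith
  qed
  then show "fder tau x \<le> 0" using fder_sign(1)[OF tau x0 xt] fx by linarith
qed (use ab in auto)

lemma f_inc:
  assumes tau: "0 < tau" and lbar: "0 < lbar" "lbar < pi / (2 * tau)"
    and lbar_min: "\<forall>l. 0 < l \<longrightarrow> l < pi / (2 * tau) \<longrightarrow> f_tau tau lbar \<le> f_tau tau l"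
    and ab: "lbar \<le> a" "a \<le> b" "b * tau < pi / 2"
  shows "f_tau tau a \<le> f_tau tau b"
proof (rule deriv_nonneg_imp_mono[where g="f_tau tau" and g'="fder tau" and a=a and b=b])
  have fx: "lbar * tau - cos (lbar * tau) = 0" by (rule lbar_fix[OF tau lbar lbar_min])
  fix x assume x: "x \<in> {a..b}"
  then have x0: "0 < x" and xl: "lbar \<le> x" using ab lbar by auto
  have "x * tau \<le> b * tau" using x tau by (intro mult_right_mono) auto
  then have xt: "x * tau < pi/2" using ab by linarith
  show "(f_tau tau has_real_derivative fder tau x) (at x)" by (rule f_deriv[OF tau x0 xt])
  have "lbar*tau - cos (lbar*tau) \<le> x*tau - cos (x*tau)"
  proof (rule g_mono)
    show "0 \<le> lbar*tau" using lbar tau by simp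
    show "lbar*tau \<le> x*tau" using xl tau by simp
    show "x*tau \<le> pi" using xt pi_gt_zero by linarith
  qed
  then show "fder tau x \<ge> 0" using fder_sign(2)[OF tau x0 xt] fx by linarith
qed (use ab in auto)

lemma f_pos:
  assumes tau: "0 < tau" and l: "0 < l" "l * tau < pi/2"
  shows "0 < f_tau tau l"
proof -
  have lt: "0 < l*tau" using tau l by simp
  have s1: "sin (l*tau) < sin (pi/2)"
      using lt l(2) by (intro sin_monotone_2pi) auto
  have "0 < cos (l*tau)" using lt l(2) by (intro cos_gt_zero_pi) auto
  then show ?thesis using s1 l unfolding f_tau_def by simp
qed


definition RR :: "nat \<Rightarrow> (nat \<Rightarrow> nat \<Rightarrow> real) \<Rightarrow> nat \<Rightarrow> nat \<Rightarrow> real" where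
  "RR n Q i p = (\<Sum>k<n. centering n i k * Q k p)"

definition dd :: "real \<Rightarrow> (nat \<Rightarrow> real) \<Rightarrow> nat \<Rightarrow> real" where
  "dd tau mu k = (if k = 0 then 0 else f_tau tau (mu k) / 2)"

lemma quad_nonneg:
  fixes M R :: "nat \<Rightarrow> nat \<Rightarrow> real"
  assumes M: "\<forall>i<n. \<forall>j<n. M i j = (\<Sum>p<n. R i p * e p * R j p)"
    and e: "\<forall>p<n. 0 \<le> e p"
  shows "0 \<le> (\<Sum>i<n. \<Sum>j<n. x i * M i j * x j)"
proof -
  have "(\<Sum>i<n. \<Sum>j<n. x i * M i j * x j) = (\<Sum>i<n. \<Sum>j<n. \<Sum>p<n. e p * (x i * R i p) * (x j * R j p))"
    using M by (intro sum.cong refl) (simp add: sum_distrib_left sum_distrib_right algebra_simps)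
  also have "\<dots> = (\<Sum>p<n. e p * (\<Sum>i<n. x i * R i p) * (\<Sum>j<n. x j * R j p))"
  proof -
    have "(\<Sum>p<n. e p * (\<Sum>i<n. x i * R i p) * (\<Sum>j<n. x j * R j p))
       = (\<Sum>p<n. \<Sum>i<n. \<Sum>j<n. e p * (x i * R i p) * (x j * R j p))"
      by (intro sum.cong refl, subst mult.assoc, subst sum_product) (simp add: sum_distrib_left mult.assoc)
    also have "\<dots> = (\<Sum>i<n. \<Sum>p<n. \<Sum>j<n. e p * (x i * R i p) * (x j * R j p))"
      by (rule sum.swap)
    also have "\<dots> = (\<Sum>i<n. \<Sum>j<n. \<Sum>p<n. e p * (x i * R i p) * (x j * R j p))"
      by (rule sum.cong[OF refl], rule sum.swap)
    finally show ?thesis by simp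
  qed
  also have "\<dots> = (\<Sum>p<n. e p * (\<Sum>i<n. x i * R i p)\<^sup>2)"
    by (simp add: power2_eq_square mult.assoc)
  also have "0 \<le> \<dots>" using e by (intro sum_nonneg) simp
  finally show ?thesis .
qed

lemma cov_entry:
  assumes i: "i < n" and j: "j < n"
  shows "steady_cov n tau b Q mu i j = (\<Sum>p<n. RR n Q i p * (b\<^sup>2 * dd tau mu p) * RR n Q j p)"
proof -
  have D: "\<And>i p. p < n \<Longrightarrow> mmul n (mmul n (centering n) Q) (mdiag (dd tau mu)) i p = RR n Q i p * dd tau mu p"
    unfolding mmul_def mdiag_def RR_def
    by (simp add: if_distrib[of "\<lambda>z. _ * z"] sum.delta' cong: if_cong)
  have E: "mmul n (mmul n (mmul n (centering n) Q) (mdiag (dd tau mu))) (mtrans Q) i m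
     = (\<Sum>p<n. RR n Q i p * dd tau mu p * Q m p)" for m
    unfolding mmul_def[of n "mmul n (mmul n (centering n) Q) (mdiag (dd tau mu))"] mtrans_def
    using D by (intro sum.cong) auto
  have sym: "centering n m j = centering n j m" for m unfolding centering_def by auto
  have "steady_cov n tau b Q mu i j = b\<^sup>2 * (\<Sum>m<n. (\<Sum>p<n. RR n Q i p * dd tau mu p * Q m p) * centering n m j)"
    unfolding steady_cov_def mscale_def dd_def[symmetric]
    by (simp add: mmul_def[of n "mmul n (mmul n (mmul n (centering n) Q) (mdiag (dd tau mu))) (mtrans Q)"] E)
  also have "\<dots> = b\<^sup>2 * (\<Sum>p<n. RR n Q i p * dd tau mu p * (\<Sum>m<n. centering n j m * Q m p))"
  proof -
    have "(\<Sum>m<n. (\<Sum>p<n. RR n Q i p * dd tau mu p * Q m p) * centering n m j)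
        = (\<Sum>m<n. \<Sum>p<n. RR n Q i p * dd tau mu p * Q m p * centering n m j)"
      by (simp add: sum_distrib_right)
    also have "\<dots> = (\<Sum>p<n. \<Sum>m<n. RR n Q i p * dd tau mu p * Q m p * centering n m j)"
      by (rule sum.swap)
    also have "\<dots> = (\<Sum>p<n. RR n Q i p * dd tau mu p * (\<Sum>m<n. centering n j m * Q m p))"
      by (simp add: sum_distrib_left sym mult_ac)
    finally show ?thesis by simp
  qed
  also have "\<dots> = (\<Sum>p<n. RR n Q i p * (b\<^sup>2 * dd tau mu p) * RR n Q j p)"
    unfolding RR_def by (simp add: sum_distrib_left mult.assoc mult.left_commute)
  finally show ?thesis .
qed

lemma loewner_lower:
  assumes "\<forall>p<n. c * dd tau mu1 p \<le> dd tau mu2 p"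
  shows "loewner_le n (mscale c (steady_cov n tau b Q mu1)) (steady_cov n tau b Q mu2)"
  unfolding loewner_le_def
proof
  fix x
  show "0 \<le> (\<Sum>i<n. \<Sum>j<n. x i * (steady_cov n tau b Q mu2 i j - mscale c (steady_cov n tau b Q mu1) i j) * x j)"
  proof (rule quad_nonneg[where R="RR n Q" and e="\<lambda>p. b\<^sup>2 * (dd tau mu2 p - c * dd tau mu1 p)"])
    show "\<forall>i<n. \<forall>j<n. steady_cov n tau b Q mu2 i j - mscale c (steady_cov n tau b Q mu1) i j =
        (\<Sum>p<n. RR n Q i p * (b\<^sup>2 * (dd tau mu2 p - c * dd tau mu1 p)) * RR n Q j p)"
      by (simp add: cov_entry mscale_def sum_distrib_left sum_subtractf[symmetric] algebra_simps)
    show "\<forall>p<n. 0 \<le> b\<^sup>2 * (dd tau mu2 p - c * dd tau mu1 p)" using assms by simp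
  qed
qed

lemma loewner_upper:
  assumes "\<forall>p<n. dd tau mu2 p \<le> c * dd tau mu1 p"
  shows "loewner_le n (steady_cov n tau b Q mu2) (mscale c (steady_cov n tau b Q mu1))"
  unfolding loewner_le_def
proof
  fix x
  show "0 \<le> (\<Sum>i<n. \<Sum>j<n. x i * (mscale c (steady_cov n tau b Q mu1) i j - steady_cov n tau b Q mu2 i j) * x j)"
  proof (rule quad_nonneg[where R="RR n Q" and e="\<lambda>p. b\<^sup>2 * (c * dd tau mu1 p - dd tau mu2 p)"])
    show "\<forall>i<n. \<forall>j<n. mscale c (steady_cov n tau b Q mu1) i j - steady_cov n tau b Q mu2 i j =
        (\<Sum>p<n. RR n Q i p * (b\<^sup>2 * (c * dd tau mu1 p - dd tau mu2 p)) * RR n Q j p)"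
      by (simp add: cov_entry mscale_def sum_distrib_left sum_subtractf[symmetric] algebra_simps)
    show "\<forall>p<n. 0 \<le> b\<^sup>2 * (c * dd tau mu1 p - dd tau mu2 p)" using assms by simp
  qed
qed


lemma lap_psd:
  assumes g: "weighted_simple_graph n w"
  shows "0 \<le> (\<Sum>i<n. \<Sum>j<n. x i * laplacian n w i j * x j)"
proof -
  have sym: "w i j = w j i" and diag: "w i i = 0" and nn: "0 \<le> w i j" for i j
    using g unfolding weighted_simple_graph_def by auto
  have L: "laplacian n w i j = (if i = j then (\<Sum>k<n. w i k) else 0) - w i j" for i j
    unfolding laplacian_def using diag by auto
  have A: "(\<Sum>i<n. \<Sum>j<n. x i * laplacian n w i j * x j)
      = (\<Sum>i<n. \<Sum>j<n. w i j * (x i)\<^sup>2) - (\<Sum>i<n. \<Sum>j<n. w i j * x i * x j)"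
  proof -
    have "(\<Sum>i<n. \<Sum>j<n. x i * laplacian n w i j * x j)
       = (\<Sum>i<n. (\<Sum>j<n. x i * (if i = j then (\<Sum>k<n. w i k) else 0) * x j) - (\<Sum>j<n. w i j * x i * x j))"
      unfolding L by (intro sum.cong refl) (simp add: algebra_simps sum_subtractf)
    also have "\<dots> = (\<Sum>i<n. (\<Sum>j<n. w i j * (x i)\<^sup>2) - (\<Sum>j<n. w i j * x i * x j))"
    proof (intro sum.cong refl)
      fix i assume i: "i \<in> {..<n}"
      have "(\<Sum>j<n. x i * (if i = j then (\<Sum>k<n. w i k) else 0) * x j)
          = (\<Sum>j<n. if i = j then x i * (\<Sum>k<n. w i k) * x i else 0)"
        by (intro sum.cong refl) auto
      also have "\<dots> = x i * (\<Sum>k<n. w i k) * x i" using i by simp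
      also have "\<dots> = (\<Sum>j<n. w i j * (x i)\<^sup>2)"
        by (simp add: sum_distrib_left sum_distrib_right power2_eq_square mult_ac)
      finally show "(\<Sum>j<n. x i * (if i = j then (\<Sum>k<n. w i k) else 0) * x j) - (\<Sum>j<n. w i j * x i * x j)
          = (\<Sum>j<n. w i j * (x i)\<^sup>2) - (\<Sum>j<n. w i j * x i * x j)" by simp
    qed
    finally show ?thesis by (simp add: sum_subtractf)
  qed
  have B: "(\<Sum>i<n. \<Sum>j<n. w i j * (x i - x j)\<^sup>2)
      = 2 * ((\<Sum>i<n. \<Sum>j<n. w i j * (x i)\<^sup>2) - (\<Sum>i<n. \<Sum>j<n. w i j * x i * x j))"
  proof -
    have sw: "(\<Sum>i<n. \<Sum>j<n. w i j * (x j)\<^sup>2) = (\<Sum>i<n. \<Sum>j<n. w i j * (x i)\<^sup>2)"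
      by (subst sum.swap) (simp add: sym)
    have "(\<Sum>i<n. \<Sum>j<n. w i j * (x i - x j)\<^sup>2)
        = (\<Sum>i<n. \<Sum>j<n. w i j * (x i)\<^sup>2) + (\<Sum>i<n. \<Sum>j<n. w i j * (x j)\<^sup>2) - 2 * (\<Sum>i<n. \<Sum>j<n. w i j * x i * x j)"
      by (simp add: power2_diff algebra_simps sum.distrib sum_subtractf sum_distrib_left)
    then show ?thesis using sw by simp
  qed
  have "0 \<le> (\<Sum>i<n. \<Sum>j<n. w i j * (x i - x j)\<^sup>2)"
    using nn by (intro sum_nonneg) simp
  then show ?thesis using A B by simp
qed

lemma lam_nonneg:
  assumes g: "weighted_simple_graph n w"
    and Q_orth: "\<forall>i<n. \<forall>j<n. (\<Sum>k<n. Q k i * Q k j) = (if i = j then 1 else 0)"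
    and decomp: "\<forall>i<n. \<forall>j<n. laplacian n w i j = (\<Sum>k<n. Q i k * lam k * Q j k)"
    and k: "k < n"
  shows "0 \<le> lam k"
proof -
  have "(\<Sum>i<n. \<Sum>j<n. Q i k * laplacian n w i j * Q j k)
      = (\<Sum>i<n. \<Sum>j<n. \<Sum>m<n. lam m * (Q i k * Q i m) * (Q j m * Q j k))"
    using decomp by (intro sum.cong refl) (simp add: sum_distrib_left sum_distrib_right mult_ac)
  also have "\<dots> = (\<Sum>i<n. \<Sum>m<n. \<Sum>j<n. lam m * (Q i k * Q i m) * (Q j m * Q j k))"
    by (rule sum.cong[OF refl], rule sum.swap)
  also have "\<dots> = (\<Sum>m<n. \<Sum>i<n. \<Sum>j<n. lam m * (Q i k * Q i m) * (Q j m * Q j k))"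
    by (rule sum.swap)
  also have "\<dots> = (\<Sum>m<n. lam m * (\<Sum>i<n. Q i k * Q i m) * (\<Sum>j<n. Q j m * Q j k))"
    by (intro sum.cong refl, subst mult.assoc, subst sum_product) (simp add: sum_distrib_left mult.assoc)
  also have "\<dots> = (\<Sum>m<n. if m = k then lam m else 0)"
    using Q_orth k by (intro sum.cong refl) auto
  also have "\<dots> = lam k" using k by simp
  finally show ?thesis using lap_psd[OF g, of "\<lambda>i. Q i k"] by simp
qed


lemma scaling_bound:
  fixes Fl Fm X c :: real
  assumes "0 < Fl" "\<bar>X - Fl\<bar> / Fl \<le> c"
  shows "X \<le> Fm \<Longrightarrow> (1 - c) * (Fl / 2) \<le> Fm / 2"
    and "Fm \<le> X \<Longrightarrow> Fm / 2 \<le> (1 + c) * (Fl / 2)"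
proof -
  have "\<bar>X - Fl\<bar> \<le> c * Fl" using assms by (simp add: divide_le_eq)
  then show "X \<le> Fm \<Longrightarrow> (1 - c) * (Fl / 2) \<le> Fm / 2"
    and "Fm \<le> X \<Longrightarrow> Fm / 2 \<le> (1 + c) * (Fl / 2)"
    by (auto simp: algebra_simps abs_if split: if_splits)
qed

theorem proposition4:
  fixes n :: nat and w0 :: "nat \<Rightarrow> nat \<Rightarrow> real" and Q :: "nat \<Rightarrow> nat \<Rightarrow> real"
    and lam :: "nat \<Rightarrow> real" and tau b alpha s lbar :: real
  assumes n2: "2 \<le> n"
    and graph: "weighted_simple_graph n w0"
    and conn: "graph_connected n w0"
    and Q_orth: "\<forall>i<n. \<forall>j<n. (\<Sum>k<n. Q k i * Q k j) = (if i = j then 1 else 0)"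
    and Q_first: "\<forall>i<n. Q i 0 = 1 / sqrt (real n)"
    and decomp: "\<forall>i<n. \<forall>j<n. laplacian n w0 i j = (\<Sum>k<n. Q i k * lam k * Q j k)"
    and lam0: "lam 0 = 0"
    and lam_sorted: "\<forall>i j. 1 \<le> i \<longrightarrow> i \<le> j \<longrightarrow> j < n \<longrightarrow> lam i \<le> lam j"
    and tau: "0 < tau" and b: "b \<noteq> 0"
    and alpha: "0 \<le> alpha" "alpha < 1"
    and stab: "(1 + alpha) * lam (n - 1) * tau < pi / 2"
    and lbar: "0 < lbar" "lbar < pi / (2 * tau)"
    and lbar_min: "\<forall>l. 0 < l \<longrightarrow> l < pi / (2 * tau) \<longrightarrow> f_tau tau lbar \<le> f_tau tau l"
    and s: "1 - alpha \<le> s" "s \<le> 1 + alpha"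
  shows
    "((1 + alpha) * lam (n - 1) \<le> lbar \<longrightarrow>
       (let em = Max ((\<lambda>k. chi_plus tau alpha (lam k)) ` {1..<n});
            ep = Max ((\<lambda>k. chi_minus tau alpha (lam k)) ` {1..<n})
        in loewner_le n (mscale (1 - em) (steady_cov n tau b Q lam))
                        (steady_cov n tau b Q (\<lambda>k. s * lam k)) \<and>
           loewner_le n (steady_cov n tau b Q (\<lambda>k. s * lam k))
                        (mscale (1 + ep) (steady_cov n tau b Q lam)))) \<and>
     ((1 - alpha) * lam 1 \<ge> lbar \<longrightarrow>
       (let ep = Max ((\<lambda>k. chi_plus tau alpha (lam k)) ` {1..<n});
            em = Max ((\<lambda>k. chi_minus tau alpha (lam k)) ` {1..<n})
        in loewner_le n (mscale (1 - em) (steady_cov n tau b Q lam))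
                        (steady_cov n tau b Q (\<lambda>k. s * lam k)) \<and>
           loewner_le n (steady_cov n tau b Q (\<lambda>k. s * lam k))
                        (mscale (1 + ep) (steady_cov n tau b Q lam))))"
proof -
  let ?F = "f_tau tau"
  have fin: "finite ((\<lambda>k. chi_plus tau alpha (lam k)) ` {1..<n})"
    "finite ((\<lambda>k. chi_minus tau alpha (lam k)) ` {1..<n})" by auto
  have sorted1: "lam p \<le> lam (n - 1)" if "1 \<le> p" "p < n" for p
    using lam_sorted that by auto
  have F0: "?F 0 = 0" unfolding f_tau_def by simp
  have dd0: "dd tau mu 0 = 0" for mu unfolding dd_def by simp
  have stabl: "(1 + alpha) * lam p * tau < pi / 2" if "1 \<le> p" "p < n" for p
  proof -
    have "(1 + alpha) * lam p \<le> (1 + alpha) * lam (n - 1)"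
      using sorted1[OF that] alpha by (intro mult_left_mono) auto
    then have "(1 + alpha) * lam p * tau \<le> (1 + alpha) * lam (n - 1) * tau"
      using tau by (intro mult_right_mono) auto
    then show ?thesis using stab by linarith
  qed
  show ?thesis
  proof (intro conjI impI)
    assume H: "(1 + alpha) * lam (n - 1) \<le> lbar"
    define em where "em = Max ((\<lambda>k. chi_plus tau alpha (lam k)) ` {1..<n})"
    define ep where "ep = Max ((\<lambda>k. chi_minus tau alpha (lam k)) ` {1..<n})"
    have key: "(1 - em) * dd tau lam p \<le> dd tau (\<lambda>k. s * lam k) p \<and>
               dd tau (\<lambda>k. s * lam k) p \<le> (1 + ep) * dd tau lam p" if p: "p < n" for p
    proof (cases "p = 0")
      case True then show ?thesis by (simp add: dd0)
    next
      case False
      then have p1: "1 \<le> p" by simp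
      let ?l = "lam p"
      have l0: "0 \<le> ?l" by (rule lam_nonneg[OF graph Q_orth decomp p])
      show ?thesis
      proof (cases "?l = 0")
        case True then show ?thesis using False by (simp add: dd_def F0)
      next
        case False
        then have lp: "0 < ?l" using l0 by simp
        have ln: "?l \<le> lam (n - 1)" by (rule sorted1[OF p1 p])
        have ul: "(1 + alpha) * ?l \<le> lbar"
          using H ln alpha by (smt (verit) mult_left_mono)
        have a0: "0 < (1 - alpha) * ?l" using alpha lp by simp
        have am: "(1 - alpha) * ?l \<le> s * ?l" using s lp by (intro mult_right_mono) auto
        have mu: "s * ?l \<le> (1 + alpha) * ?l" using s lp by (intro mult_right_mono) auto
        have Fu: "?F ((1 + alpha) * ?l) \<le> ?F (s * ?l)"
          by (rule f_dec[OF tau lbar lbar_min]) (use a0 am mu ul in auto)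
        have Fa: "?F (s * ?l) \<le> ?F ((1 - alpha) * ?l)"
          by (rule f_dec[OF tau lbar lbar_min]) (use a0 am mu ul in auto)
        have "?l \<le> (1 + alpha) * ?l" using alpha lp by simp
        then have llb: "?l \<le> lbar" using ul by linarith
        have lt: "?l * tau < pi / 2"
        proof -
          have "?l * tau \<le> lbar * tau" using llb tau by simp
          moreover have "lbar * tau < pi / 2" using lbar tau by (simp add: field_simps)
          ultimately show ?thesis by linarith
        qed
        have Fl: "0 < ?F ?l" by (rule f_pos[OF tau lp lt])
        have c1: "chi_plus tau alpha ?l \<le> em"
          unfolding em_def using p1 p by (intro Max_ge fin) auto
        have c2: "chi_minus tau alpha ?l \<le> ep"
          unfolding ep_def using p1 p by (intro Max_ge fin) auto
        have b1: "\<bar>?F ((1 + alpha) * ?l) - ?F ?l\<bar> / ?F ?l \<le> em"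
          using c1 unfolding chi_plus_def .
        have b2: "\<bar>?F ((1 - alpha) * ?l) - ?F ?l\<bar> / ?F ?l \<le> ep"
          using c2 unfolding chi_minus_def .
        show ?thesis
          using scaling_bound(1)[OF Fl b1 Fu] scaling_bound(2)[OF Fl b2 Fa] False p1
          by (simp add: dd_def)
      qed
    qed
    show "let em = Max ((\<lambda>k. chi_plus tau alpha (lam k)) ` {1..<n});
            ep = Max ((\<lambda>k. chi_minus tau alpha (lam k)) ` {1..<n})
        in loewner_le n (mscale (1 - em) (steady_cov n tau b Q lam))
                        (steady_cov n tau b Q (\<lambda>k. s * lam k)) \<and>
           loewner_le n (steady_cov n tau b Q (\<lambda>k. s * lam k))
                        (mscale (1 + ep) (steady_cov n tau b Q lam))"
      unfolding Let_def em_def[symmetric] ep_def[symmetric]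
      using key by (intro conjI loewner_lower loewner_upper) auto
  next
    assume H: "(1 - alpha) * lam 1 \<ge> lbar"
    define ep where "ep = Max ((\<lambda>k. chi_plus tau alpha (lam k)) ` {1..<n})"
    define em where "em = Max ((\<lambda>k. chi_minus tau alpha (lam k)) ` {1..<n})"
    have key: "(1 - em) * dd tau lam p \<le> dd tau (\<lambda>k. s * lam k) p \<and>
               dd tau (\<lambda>k. s * lam k) p \<le> (1 + ep) * dd tau lam p" if p: "p < n" for p
    proof (cases "p = 0")
      case True then show ?thesis by (simp add: dd0)
    next
      case False
      then have p1: "1 \<le> p" by simp
      let ?l = "lam p"
      have l1: "lam 1 \<le> ?l" using lam_sorted p1 p by auto
      have al: "lbar \<le> (1 - alpha) * ?l"
        using H l1 alpha by (smt (verit) mult_left_mono)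
      have lp: "0 < ?l"
      proof (rule ccontr)
        assume "\<not> 0 < ?l"
        then have "(1 - alpha) * ?l \<le> 0" using alpha by (simp add: mult_nonneg_nonpos)
        then show False using al lbar by linarith
      qed
      have am: "(1 - alpha) * ?l \<le> s * ?l" using s lp by (intro mult_right_mono) auto
      have mu: "s * ?l \<le> (1 + alpha) * ?l" using s lp by (intro mult_right_mono) auto
      have ut: "(1 + alpha) * ?l * tau < pi / 2" by (rule stabl[OF p1 p])
      have "s * ?l * tau \<le> (1 + alpha) * ?l * tau" using mult_right_mono[OF mu, of tau] tau by simp
      then have mt: "s * ?l * tau < pi / 2" using ut by linarith
      have Fa: "?F ((1 - alpha) * ?l) \<le> ?F (s * ?l)"
        by (rule f_inc[OF tau lbar lbar_min]) (use al am mt in auto)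
      have Fu: "?F (s * ?l) \<le> ?F ((1 + alpha) * ?l)"
        by (rule f_inc[OF tau lbar lbar_min]) (use al am mu ut in auto)
      have lt: "?l * tau < pi / 2"
      proof -
        have "?l \<le> (1 + alpha) * ?l" using alpha lp by simp
        then have "?l * tau \<le> (1 + alpha) * ?l * tau" using tau by (intro mult_right_mono) auto
        then show ?thesis using ut by linarith
      qed
      have Fl: "0 < ?F ?l" by (rule f_pos[OF tau lp lt])
      have c1: "chi_plus tau alpha ?l \<le> ep"
        unfolding ep_def using p1 p by (intro Max_ge fin) auto
      have c2: "chi_minus tau alpha ?l \<le> em"
        unfolding em_def using p1 p by (intro Max_ge fin) auto
      have b1: "\<bar>?F ((1 + alpha) * ?l) - ?F ?l\<bar> / ?F ?l \<le> ep"
        using c1 unfolding chi_plus_def .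
      have b2: "\<bar>?F ((1 - alpha) * ?l) - ?F ?l\<bar> / ?F ?l \<le> em"
        using c2 unfolding chi_minus_def .
      show ?thesis
        using scaling_bound(1)[OF Fl b2 Fa] scaling_bound(2)[OF Fl b1 Fu] False p1
        by (simp add: dd_def)
    qed
    show "let ep = Max ((\<lambda>k. chi_plus tau alpha (lam k)) ` {1..<n});
            em = Max ((\<lambda>k. chi_minus tau alpha (lam k)) ` {1..<n})
        in loewner_le n (mscale (1 - em) (steady_cov n tau b Q lam))
                        (steady_cov n tau b Q (\<lambda>k. s * lam k)) \<and>
           loewner_le n (steady_cov n tau b Q (\<lambda>k. s * lam k))
                        (mscale (1 + ep) (steady_cov n tau b Q lam))"
      unfolding Let_def em_def[symmetric] ep_def[symmetric]
      using key by (intro conjI loewner_lower loewner_upper) auto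
  qed
qed

end
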